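(* Let $a>0$ and let $f$ be a real-valued smooth function on an open interval containing $[-a,a]$. Suppose $f^{(n)}(t)\neq0$ for all integers $n\ge0$ and all $t\in[-a,a]$, and that there is a constant $M$ such that $\left|\frac{f^{(n+1)}(t)}{f^{(n)}(t)}\right|\le M$ for all $n\ge0$ and all $t\in[-a,a]$. Then the series $\hat f$ converges uniformly on $[-a,a]$ and $\hat f(t)=f(0)$ for all $t\in[-a,a]$.
   Context: For a smooth function $f$ on an interval containing the point $t$, $\hat f(t)$ denotes the series $\hat f(t):=\sum_{n=0}^{\infty}\frac{(-1)^n}{n!}\,t^n f^{(n)}(t)$; convergence of $\hat f$ refers to convergence of its partial sums, and $\hat f(t)$ also denotes the sum. *)

theory Defs
  imports "HOL-Analysis.Analysis"
begin

definition nth_deriv :: "nat \<Rightarrow> (real \<Rightarrow> real) \<Rightarrow> real \<Rightarrow> real" where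
  "nth_deriv n f = (deriv ^^ n) f"

definition smooth_on :: "real set \<Rightarrow> (real \<Rightarrow> real) \<Rightarrow> bool" where
  "smooth_on U f \<longleftrightarrow> (\<forall>n. \<forall>t\<in>U. (nth_deriv n f has_real_derivative nth_deriv (Suc n) f t) (at t))"

definition hat_term :: "(real \<Rightarrow> real) \<Rightarrow> nat \<Rightarrow> real \<Rightarrow> real" where
  "hat_term f n t = (-1) ^ n / fact n * t ^ n * nth_deriv n f t"

end

theory Submission
  imports Defs
begin

theorem theorem4:
  fixes f :: "real \<Rightarrow> real" and a M :: real and U :: "real set"
  assumes "a > 0"
    and "open U" and "is_interval U" and "{-a..a} \<subseteq> U"
    and "smooth_on U f"
    and "\<And>n t. t \<in> {-a..a} \<Longrightarrow> nth_deriv n f t \<noteq> 0"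
    and "\<And>n t. t \<in> {-a..a} \<Longrightarrow> \<bar>nth_deriv (Suc n) f t / nth_deriv n f t\<bar> \<le> M"
  shows "uniformly_convergent_on {-a..a} (\<lambda>N t. \<Sum>n<N. hat_term f n t)
       \<and> (\<forall>t\<in>{-a..a}. (\<lambda>n. hat_term f n t) sums f 0)"
proof -
  have f0: "nth_deriv 0 f = f" by (simp add: nth_deriv_def)
  have D: "\<And>m s. s \<in> {-a..a} \<Longrightarrow> DERIV (nth_deriv m f) s :> nth_deriv (Suc m) f s"
    using assms(4,5) unfolding smooth_on_def by blast
  have "continuous_on {-a..a} f"
    using D[of _ 0] f0
    by (metis DERIV_isCont continuous_at_imp_continuous_on)
  then have "bounded (f ` {-a..a})"
    by (intro compact_imp_bounded compact_continuous_image) auto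
  then obtain C where C0: "\<forall>t\<in>{-a..a}. \<bar>f t\<bar> \<le> C"
    unfolding bounded_iff by (auto simp: real_norm_def)
  then have C: "\<And>t. t \<in> {-a..a} \<Longrightarrow> \<bar>f t\<bar> \<le> C" by blast
  have "(0::real) \<in> {-a..a}" using assms(1) by auto
  then have M0: "M \<ge> 0" using assms(7)[of 0 0] assms(1) by (meson abs_ge_zero order_trans)
  have step: "\<bar>nth_deriv (Suc n) f t\<bar> \<le> M * \<bar>nth_deriv n f t\<bar>" if t: "t \<in> {-a..a}" for n t
  proof -
    have nz: "\<bar>nth_deriv n f t\<bar> > 0" using assms(6)[OF t] by simp
    have "\<bar>nth_deriv (Suc n) f t\<bar> / \<bar>nth_deriv n f t\<bar> \<le> M"
      using assms(7)[OF t, of n] by (simp add: abs_divide)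
    then show ?thesis using nz by (simp add: divide_le_eq mult.commute)
  qed
  have bnd: "\<bar>nth_deriv n f t\<bar> \<le> M ^ n * C" if t: "t \<in> {-a..a}" for n t
  proof (induction n)
    case 0 then show ?case using C[OF t] f0 by simp
  next
    case (Suc n)
    have "\<bar>nth_deriv (Suc n) f t\<bar> \<le> M * \<bar>nth_deriv n f t\<bar>" using step[OF t] .
    also have "\<dots> \<le> M * (M ^ n * C)" using Suc M0 by (intro mult_left_mono) auto
    finally show ?case by simp
  qed
  define B where "B n = C * ((M * a) ^ n / fact n)" for n
  have sumB: "summable B"
    unfolding B_def by (intro summable_mult) (use summable_exp[of "M*a"] in \<open>simp add: field_simps\<close>)
  have B0: "B \<longlonglongrightarrow> 0" using summable_LIMSEQ_zero[OF sumB] .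
  have tb: "\<bar>t ^ n / fact n * nth_deriv n f s\<bar> \<le> B n"
    if t: "t \<in> {-a..a}" and s: "s \<in> {-a..a}" for n t s
  proof -
    have "\<bar>t\<bar> ^ n \<le> a ^ n" using t by (intro power_mono) auto
    have "\<bar>t ^ n / fact n * nth_deriv n f s\<bar> = \<bar>t\<bar> ^ n * \<bar>nth_deriv n f s\<bar> / fact n"
      by (simp add: abs_mult power_abs)
    also have "\<dots> \<le> a ^ n * (M ^ n * C) / fact n"
      using \<open>\<bar>t\<bar> ^ n \<le> a ^ n\<close> bnd[OF s, of n] assms(1)
      by (intro divide_right_mono mult_mono) auto
    also have "\<dots> = B n" by (simp add: B_def power_mult_distrib)
    finally show ?thesis .
  qed
  have ht: "hat_term f n t = nth_deriv n f t / fact n * (0 - t) ^ n" for n t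
    by (simp add: hat_term_def power_minus')
  have unif: "uniformly_convergent_on {-a..a} (\<lambda>N t. \<Sum>n<N. hat_term f n t)"
  proof (rule Weierstrass_m_test'[where M=B])
    fix n t assume t: "(t::real) \<in> {-a..a}"
    show "norm (hat_term f n t) \<le> B n"
      using tb[OF t t, of n] by (simp add: hat_term_def abs_mult)
  qed (rule sumB)
  have "(\<lambda>n. hat_term f n t) sums f 0" if t: "t \<in> {-a..a}" for t
  proof (cases "t = 0")
    case True
    have "(\<lambda>n. hat_term f n t) = (\<lambda>n. if n = 0 then f 0 else 0)"
      using True f0 by (auto simp: hat_term_def)
    then show ?thesis using sums_single[of 0 "\<lambda>_. f 0"] by simp
  next
    case False
    have ev: "eventually (\<lambda>N. norm (f 0 - (\<Sum>n<N. hat_term f n t)) \<le> B N) sequentially"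
      unfolding eventually_sequentially
    proof (intro exI allI impI)
      fix N :: nat assume "N \<ge> 1"
      have "\<exists>s. (if 0 < t then 0 < s \<and> s < t else t < s \<and> s < 0) \<and>
          f 0 = (\<Sum>m<N. (nth_deriv m f t / fact m) * (0 - t)^m) + (nth_deriv N f s / fact N) * (0 - t)^N"
        by (rule Taylor[where a="-a" and b=a]) (use \<open>N \<ge> 1\<close> f0 D t False assms(1) in auto)
      then obtain s where sp: "(if 0 < t then 0 < s \<and> s < t else t < s \<and> s < 0)"
        and eq0: "f 0 = (\<Sum>m<N. (nth_deriv m f t / fact m) * (0 - t)^m) + (nth_deriv N f s / fact N) * (0 - t)^N"
        by blast
      have s: "s \<in> {-a..a}" using sp t by (auto split: if_splits)
      have eq: "f 0 = (\<Sum>m<N. hat_term f m t) + (nth_deriv N f s / fact N) * (0 - t)^N"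
        using eq0 by (simp only: ht)
      have "norm (f 0 - (\<Sum>n<N. hat_term f n t)) = \<bar>(-t) ^ N / fact N * nth_deriv N f s\<bar>"
        using eq by (simp add: mult.commute)
      also have "\<dots> \<le> B N" using tb[OF _ s, of "-t" N] t by auto
      finally show "norm (f 0 - (\<Sum>n<N. hat_term f n t)) \<le> B N" .
    qed
    have "(\<lambda>N. f 0 - (\<Sum>n<N. hat_term f n t)) \<longlonglongrightarrow> 0"
      by (rule Lim_null_comparison[OF ev B0])
    then have "(\<lambda>N. f 0 - (f 0 - (\<Sum>n<N. hat_term f n t))) \<longlonglongrightarrow> f 0 - 0"
      by (intro tendsto_diff tendsto_const)
    then show ?thesis unfolding sums_def by simp
  qed
  with unif show ?thesis by blast
qed

end
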